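(* Let $\Omega\subset\mathbb{P}(\mathbb{R}^d)$ be a properly convex domain, $\mathcal{C}\subset\Omega$ a non-empty closed convex subset, and $G\le\mathrm{Stab}_\Omega(\mathcal{C})$ a subgroup acting co-compactly on $\mathcal{C}$. If $x\in\partial_i\mathcal{C}$, then there exists a non-zero $T\in\overline{G}^{\mathrm{End}}$ such that (1) $\mathbb{P}(\ker T)\cap\Omega=\emptyset$, (2) $T(\Omega)=F_\Omega(x)$, and (3) $T(\mathcal{C})=F_\Omega(x)\cap\partial_i\mathcal{C}$, where for $p=[v]\in\Omega$ we write $T(p)=[Tv]$.
   Context: Properly convex domain: open subset of $\mathbb{P}(\mathbb{R}^d)$ which is a bounded convex set in some affine chart. $\mathrm{Stab}_\Omega(X)=\{g\in\mathrm{Aut}(\Omega):gX=X\}$. For $G\le\mathrm{PGL}_d(\mathbb{R})$, $\overline{G}^{\mathrm{End}}$ is the closure in $\mathrm{End}(\mathbb{R}^d)$ of $\{g\in\mathrm{GL}_d(\mathbb{R}):[g]\in G\}$. For a convex set $C$: $\mathrm{relint}(C)$ is its interior in the projective span, $\partial C=\overline{C}\setminus\mathrm{relint}(C)$, and the ideal boundary is $\partial_i C=\partial C\setminus C$. Open face: $F_\Omega(x)=\{x\}\cup\{y\in\overline{\Omega}:\exists$ an open line segment in $\overline{\Omega}$ containing $x$ and $y\}$. Co-compact: there is a compact $K\subset\mathcal{C}$ with $G\cdot K=\mathcal{C}$. *)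

theory Defs
  imports "HOL-Analysis.Analysis"
begin

text \<open>A point of the projective space P(R^d) is represented by any
nonzero vector of real^'n (d = CARD('n)); a subset of P(R^d) is represented by its
cone of representatives, i.e. a set of nonzero vectors closed under nonzero scaling.\<close>

definition proj_set :: "(real^'n) set \<Rightarrow> bool" where
  "proj_set S \<longleftrightarrow> 0 \<notin> S \<and> (\<forall>v\<in>S. \<forall>c. c \<noteq> 0 \<longrightarrow> c *\<^sub>R v \<in> S)"

definition chart :: "(real^'n \<Rightarrow> real) \<Rightarrow> real^'n \<Rightarrow> real^'n" where
  "chart f v = (1 / f v) *\<^sub>R v"

definition in_chart :: "(real^'n \<Rightarrow> real) \<Rightarrow> (real^'n) set \<Rightarrow> bool" where
  "in_chart f S \<longleftrightarrow> linear f \<and> (\<forall>v\<in>S. f v \<noteq> 0)"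

definition properly_convex_domain :: "(real^'n) set \<Rightarrow> bool" where
  "properly_convex_domain \<Omega> \<longleftrightarrow> proj_set \<Omega> \<and> open \<Omega> \<and>
     (\<exists>f. in_chart f \<Omega> \<and> bounded (chart f ` \<Omega>) \<and> convex (chart f ` \<Omega>))"

definition proj_convex :: "(real^'n) set \<Rightarrow> bool" where
  "proj_convex S \<longleftrightarrow> proj_set S \<and> (\<exists>f. in_chart f S \<and> convex (chart f ` S))"

text \<open>Closure in P(R^d) (the projection R^d - 0 \<rightarrow> P is an open quotient map).\<close>
definition proj_closure :: "(real^'n) set \<Rightarrow> (real^'n) set" where
  "proj_closure S = closure S - {0}"

text \<open>relint(C): interior of C in its projective span. For a cone S the affine hull of
S equals its linear span, so this is the relative interior.\<close>
definition proj_relint :: "(real^'n) set \<Rightarrow> (real^'n) set" where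
  "proj_relint S = rel_interior S"

definition proj_boundary :: "(real^'n) set \<Rightarrow> (real^'n) set" where
  "proj_boundary S = proj_closure S - proj_relint S"

definition ideal_boundary :: "(real^'n) set \<Rightarrow> (real^'n) set" where
  "ideal_boundary S = proj_boundary S - S"

definition proj_open_segment :: "real^'n \<Rightarrow> real^'n \<Rightarrow> (real^'n) set" where
  "proj_open_segment a b =
     {c *\<^sub>R (s *\<^sub>R a + t *\<^sub>R b) | c s t. c \<noteq> 0 \<and> s > 0 \<and> t > 0}"

definition open_face :: "(real^'n) set \<Rightarrow> real^'n \<Rightarrow> (real^'n) set" where
  "open_face \<Omega> x = {c *\<^sub>R x | c. c \<noteq> 0} \<union>
     {y \<in> proj_closure \<Omega>. \<exists>a b. proj_open_segment a b \<subseteq> proj_closure \<Omega> \<and>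
         x \<in> proj_open_segment a b \<and> y \<in> proj_open_segment a b}"

text \<open>A subgroup G of PGL_d(R), represented by its full preimage in GL_d(R).\<close>
definition pgl_subgroup :: "(real^'n^'n) set \<Rightarrow> bool" where
  "pgl_subgroup G \<longleftrightarrow> (\<forall>g\<in>G. invertible g) \<and> mat 1 \<in> G \<and>
     (\<forall>g\<in>G. \<forall>h\<in>G. g ** h \<in> G) \<and> (\<forall>g\<in>G. matrix_inv g \<in> G) \<and>
     (\<forall>g\<in>G. \<forall>c. c \<noteq> 0 \<longrightarrow> c *\<^sub>R g \<in> G)"

definition in_stab :: "(real^'n^'n) set \<Rightarrow> (real^'n) set \<Rightarrow> (real^'n) set \<Rightarrow> bool" where
  "in_stab G \<Omega> X \<longleftrightarrow> pgl_subgroup G \<and>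
     (\<forall>g\<in>G. (\<lambda>v. g *v v) ` \<Omega> = \<Omega> \<and> (\<lambda>v. g *v v) ` X = X)"

text \<open>Co-compact action: a compact K \<subseteq> C (in P(R^d), given by a compact set of
representatives) with G K = C.\<close>
definition cocompact :: "(real^'n^'n) set \<Rightarrow> (real^'n) set \<Rightarrow> bool" where
  "cocompact G C \<longleftrightarrow> (\<exists>K. compact K \<and> K \<subseteq> C \<and>
      C = {g *v k | g k. g \<in> G \<and> k \<in> K})"

end

theory Submission
  imports Defs
begin

lemma tendsto_mv:
  fixes A :: "nat \<Rightarrow> real^'n^'m" and u :: "nat \<Rightarrow> real^'n"
  assumes "(A \<longlongrightarrow> T) F" "(u \<longlongrightarrow> v) F"
  shows "((\<lambda>n. A n *v u n) \<longlongrightarrow> T *v v) F"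
  unfolding matrix_vector_mult_def
  by (intro vec_tendstoI) (auto intro!: tendsto_sum tendsto_mult tendsto_vec_nth assms)

locale pcd =
  fixes Om :: "(real^'n) set" and f :: "real^'n \<Rightarrow> real"
  assumes ps: "proj_set Om" and op: "open Om" and lin: "linear f"
    and nz: "\<forall>v\<in>Om. f v \<noteq> 0" and bd: "bounded (chart f ` Om)"
    and cv: "convex (chart f ` Om)" and ne: "Om \<noteq> {}"
begin

definition "D = {v\<in>Om. 0 < f v}"

lemma fadd: "f (u + v) = f u + f v" using lin by (simp add: linear_add)
lemma fscale: "f (c *\<^sub>R u) = c * f u" using lin by (simp add: linear_scale)
lemma fneg: "f (- u) = - f u" using lin by (simp add: linear_neg)
lemma fdiff: "f (u - v) = f u - f v" using lin by (simp add: linear_diff)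
lemma fbl: "bounded_linear f" using lin linear_conv_bounded_linear by blast
lemma fcont: "continuous_on S f" using fbl linear_continuous_on by blast

lemma Om_scale: "v \<in> Om \<Longrightarrow> c \<noteq> 0 \<Longrightarrow> c *\<^sub>R v \<in> Om"
  using ps unfolding proj_set_def by blast
lemma zero_notin: "0 \<notin> Om" using ps unfolding proj_set_def by blast
lemma Om_neg: "v \<in> Om \<Longrightarrow> - v \<in> Om" using Om_scale[of v "-1"] by simp

lemma Om_D: "v \<in> Om \<longleftrightarrow> v \<in> D \<or> - v \<in> D"
  using nz Om_neg[of v] Om_neg[of "-v"] by (auto simp: D_def fneg)

lemma D_Om: "v \<in> D \<Longrightarrow> v \<in> Om" by (simp add: D_def)

lemma D_scale: "v \<in> D \<Longrightarrow> 0 < c \<Longrightarrow> c *\<^sub>R v \<in> D"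
  using Om_scale by (auto simp: D_def fscale)

lemma D_add: assumes "u \<in> D" "v \<in> D" shows "u + v \<in> D"
proof -
  have fu: "0 < f u" and fv: "0 < f v" and uO: "u \<in> Om" and vO: "v \<in> Om"
    using assms by (auto simp: D_def)
  define l where "l = f u / (f u + f v)"
  have l0: "0 \<le> l" "l \<le> 1" using fu fv by (auto simp: l_def field_simps)
  have "(1 - l) *\<^sub>R chart f v + l *\<^sub>R chart f u \<in> chart f ` Om"
    using l0 uO vO by (intro convexD[OF cv]) auto
  then obtain w where w: "w \<in> Om" "(1 - l) *\<^sub>R chart f v + l *\<^sub>R chart f u = chart f w" by auto
  have "(1 - l) *\<^sub>R chart f v + l *\<^sub>R chart f u = (1 / (f u + f v)) *\<^sub>R (u + v)"
    using fu fv by (simp add: chart_def l_def field_simps scaleR_add_right)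
  hence "(1 / (f u + f v)) *\<^sub>R (u + v) = (1 / f w) *\<^sub>R w"
    using w by (simp add: chart_def)
  hence "(f u + f v) *\<^sub>R ((1 / (f u + f v)) *\<^sub>R (u + v)) = (f u + f v) *\<^sub>R ((1 / f w) *\<^sub>R w)"
    by simp
  hence "u + v = ((f u + f v) / f w) *\<^sub>R w"
    using fu fv by simp
  moreover have "(f u + f v) / f w \<noteq> 0" using fu fv nz w by auto
  ultimately have "u + v \<in> Om" using Om_scale w by metis
  thus ?thesis using fu fv by (simp add: D_def fadd)
qed

lemma D_open: "open D"
proof -
  have "open {v. (\<lambda>_. 0) v < f v}" by (rule open_Collect_less) (simp_all add: fcont continuous_on_const)
  moreover have "D = Om \<inter> {v. 0 < f v}" by (auto simp: D_def)
  ultimately show ?thesis using op by auto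
qed

lemma D_ne: "D \<noteq> {}" using ne Om_D by blast

lemma D_convex: "convex D"
  unfolding convex_def
proof (intro ballI allI impI)
  fix x y :: "real^'n" and u v :: real
  assume xy: "x \<in> D" "y \<in> D" and uv: "0 \<le> u" "0 \<le> v" "u + v = 1"
  show "u *\<^sub>R x + v *\<^sub>R y \<in> D"
  proof (cases "u = 0")
    case True thus ?thesis using uv xy by simp
  next
    case False
    show ?thesis
    proof (cases "v = 0")
      case True thus ?thesis using uv xy by simp
    next
      case False
      thus ?thesis using \<open>u \<noteq> 0\<close> uv xy by (intro D_add D_scale) auto
    qed
  qed
qed

lemma R_ex: obtains R where "R > 0" "\<forall>v\<in>closure D. norm v \<le> R * f v"
proof -
  obtain R where R: "R > 0" "\<forall>z\<in>chart f ` Om. norm z \<le> R" using bd bounded_pos by blast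
  have "\<forall>v\<in>D. norm v \<le> R * f v"
  proof
    fix v assume v: "v \<in> D"
    hence fv: "0 < f v" and "v \<in> Om" by (auto simp: D_def)
    hence "norm ((1 / f v) *\<^sub>R v) \<le> R" using R by (auto simp: chart_def)
    thus "norm v \<le> R * f v" using fv by (simp add: field_simps)
  qed
  moreover have "closed {v. norm v \<le> R * f v}"
    by (rule closed_Collect_le) (simp_all add: fcont continuous_on_norm_id continuous_on_mult_left)
  ultimately have "closure D \<subseteq> {v. norm v \<le> R * f v}"
    by (intro closure_minimal) auto
  thus ?thesis using that R by blast
qed

lemma clD_f: "v \<in> closure D \<Longrightarrow> 0 \<le> f v"
proof -
  assume v: "v \<in> closure D"
  obtain R where "R > 0" "\<forall>v\<in>closure D. norm v \<le> R * f v" using R_ex by blast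
  hence "0 \<le> R * f v" using v norm_ge_zero order_trans by blast
  thus ?thesis using \<open>R > 0\<close> by (simp add: zero_le_mult_iff)
qed

lemma clD_fpos: "v \<in> closure D \<Longrightarrow> v \<noteq> 0 \<Longrightarrow> 0 < f v"
proof -
  assume v: "v \<in> closure D" "v \<noteq> 0"
  obtain R where "R > 0" "\<forall>v\<in>closure D. norm v \<le> R * f v" using R_ex by blast
  hence "0 < R * f v" using v by (meson zero_less_norm_iff order_less_le_trans)
  thus ?thesis using \<open>R > 0\<close> by (simp add: zero_less_mult_iff)
qed

lemma pointed: "v \<in> closure D \<Longrightarrow> - v \<in> closure D \<Longrightarrow> v = 0"
  using clD_fpos[of v] clD_f[of "-v"] by (auto simp: fneg)

lemma zero_clD: "0 \<in> closure D"
proof -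
  obtain d where d: "d \<in> D" using D_ne by blast
  have "(\<lambda>n. inverse (real (Suc n)) *\<^sub>R d) \<longlonglongrightarrow> 0 *\<^sub>R d"
    by (intro tendsto_scaleR LIMSEQ_inverse_real_of_nat tendsto_const)
  moreover have "\<forall>n. inverse (real (Suc n)) *\<^sub>R d \<in> D" using d by (auto intro: D_scale)
  ultimately show ?thesis unfolding closure_sequential by auto
qed

lemma clD_scale: assumes "v \<in> closure D" "0 \<le> c" shows "c *\<^sub>R v \<in> closure D"
proof (cases "c = 0")
  case True thus ?thesis using zero_clD by simp
next
  case False
  have "(*\<^sub>R) c ` D \<subseteq> D" using False assms(2) D_scale by auto
  hence "closure ((*\<^sub>R) c ` D) \<subseteq> closure D" by (rule closure_mono)
  thus ?thesis using closure_scaleR[of c D] assms(1) by auto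
qed

lemma clD_add: assumes "u \<in> closure D" "v \<in> closure D" shows "u + v \<in> closure D"
proof -
  have "(1/2) *\<^sub>R u + (1/2) *\<^sub>R v \<in> closure D"
    using assms convex_closure[OF D_convex] by (intro convexD) auto
  from clD_scale[OF this, of 2] show ?thesis by (simp add: scaleR_add_right)
qed

lemma D_clD_add: assumes "v \<in> D" "w \<in> closure D" shows "v + w \<in> D"
proof -
  obtain e where e: "e > 0" "ball v e \<subseteq> D" using D_open assms(1) open_contains_ball by blast
  obtain w' where w': "w' \<in> D" "dist w' w < e" using assms(2) e(1) closure_approachable by blast
  have "v + (w - w') \<in> ball v e" using w' by (simp add: dist_norm norm_minus_commute)
  hence "v + (w - w') \<in> D" using e by blast
  from D_add[OF this w'(1)] show ?thesis by simp
qed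

lemma D_clD: "D \<subseteq> closure D" by (rule closure_subset)

lemma Om_eq: "Om = D \<union> (\<lambda>v. - v) ` D"
proof
  show "Om \<subseteq> D \<union> (\<lambda>v. - v) ` D"
  proof
    fix v assume "v \<in> Om"
    hence "v \<in> D \<or> - v \<in> D" using Om_D by blast
    thus "v \<in> D \<union> (\<lambda>v. - v) ` D" by (metis UnI1 UnI2 image_eqI minus_minus)
  qed
  show "D \<union> (\<lambda>v. - v) ` D \<subseteq> Om" using D_Om Om_neg by auto
qed

lemma closure_neg: "closure ((\<lambda>v. - v) ` S) = (\<lambda>v. - v) ` closure (S :: (real^'n) set)"
  using closure_scaleR[of "-1" S] by (simp add: o_def)

lemma clOm: "closure Om = closure D \<union> (\<lambda>v. - v) ` closure D"
proof -
  have "closure Om = closure (D \<union> (\<lambda>v. - v) ` D)" by (rule arg_cong[OF Om_eq])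
  thus ?thesis by (simp only: closure_Un closure_neg)
qed

lemma clOm_cases: "v \<in> closure Om \<Longrightarrow> v \<in> closure D \<or> - v \<in> closure D"
  using clOm by auto

lemma clD_clOm: "v \<in> closure D \<Longrightarrow> v \<in> closure Om"
  using clOm by auto

lemma clOm_neg: "v \<in> closure Om \<Longrightarrow> - v \<in> closure Om"
  using clOm by auto

lemma clD_Om_D: "v \<in> closure D \<Longrightarrow> v \<in> Om \<Longrightarrow> v \<in> D"
proof -
  assume a: "v \<in> closure D" "v \<in> Om"
  show "v \<in> D"
  proof (rule ccontr)
    assume "v \<notin> D"
    hence "- v \<in> D" using a Om_D by blast
    hence "- v \<in> closure D" using D_clD by blast
    hence "v = 0" using a pointed by blast
    thus False using a zero_notin by simp
  qed
qed

lemma f_mv_comb: "f (g *v (a *\<^sub>R u + b *\<^sub>R v)) = a * f (g *v u) + b * f (g *v v)"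
  by (simp add: matrix_vector_right_distrib matrix_vector_mult_scaleR fadd fscale)

lemma aut_D:
  assumes g: "(\<lambda>v. g *v v) ` Om = Om" and u: "u \<in> D" "0 < f (g *v u)" and v: "v \<in> D"
  shows "g *v v \<in> D"
proof -
  have gv: "g *v v \<in> Om" using g v D_Om by blast
  hence ne: "f (g *v v) \<noteq> 0" using nz by blast
  have "0 < f (g *v v)"
  proof (rule ccontr)
    assume "\<not> 0 < f (g *v v)"
    hence b: "f (g *v v) < 0" using ne by linarith
    define a where "a = f (g *v u)"
    define b where "b = f (g *v v)"
    define t where "t = a / (a - b)"
    have t: "0 \<le> t" "t \<le> 1" using u(2) b by (auto simp: t_def a_def b_def field_simps)
    have "(1 - t) *\<^sub>R u + t *\<^sub>R v \<in> D" using D_convex t u v by (intro convexD) auto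
    hence "g *v ((1 - t) *\<^sub>R u + t *\<^sub>R v) \<in> Om" using g D_Om by blast
    hence "f (g *v ((1 - t) *\<^sub>R u + t *\<^sub>R v)) \<noteq> 0" using nz by blast
    moreover have "f (g *v ((1 - t) *\<^sub>R u + t *\<^sub>R v)) = 0"
      unfolding f_mv_comb using u(2) b by (simp add: t_def a_def[symmetric] b_def[symmetric] field_simps)
    ultimately show False by simp
  qed
  thus ?thesis using gv by (simp add: D_def)
qed

lemma pclo_iff: "v \<in> proj_closure Om \<longleftrightarrow> v \<noteq> 0 \<and> (v \<in> closure D \<or> - v \<in> closure D)"
proof
  assume "v \<in> proj_closure Om"
  thus "v \<noteq> 0 \<and> (v \<in> closure D \<or> - v \<in> closure D)"
    unfolding proj_closure_def using clOm_cases by blast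
next
  assume a: "v \<noteq> 0 \<and> (v \<in> closure D \<or> - v \<in> closure D)"
  hence "v \<in> closure Om" using clD_clOm clOm_neg[of "-v"] by auto
  thus "v \<in> proj_closure Om" using a unfolding proj_closure_def by blast
qed

lemma seg_neg: "proj_open_segment (- a) (- b) = proj_open_segment a b"
proof -
  have e: "c *\<^sub>R (s *\<^sub>R (- a) + t *\<^sub>R (- b)) = (- c) *\<^sub>R (s *\<^sub>R a + t *\<^sub>R b)" for c s t :: real
    by (simp add: algebra_simps)
  show ?thesis
  proof (intro set_eqI iffI)
    fix z assume "z \<in> proj_open_segment (- a) (- b)"
    then obtain c s t where h: "z = c *\<^sub>R (s *\<^sub>R (- a) + t *\<^sub>R (- b))" "c \<noteq> 0" "0 < s" "0 < t"
      unfolding proj_open_segment_def by blast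
    hence "z = (- c) *\<^sub>R (s *\<^sub>R a + t *\<^sub>R b)" "- c \<noteq> 0" using e by auto
    thus "z \<in> proj_open_segment a b" unfolding proj_open_segment_def using h by blast
  next
    fix z assume "z \<in> proj_open_segment a b"
    then obtain c s t where h: "z = c *\<^sub>R (s *\<^sub>R a + t *\<^sub>R b)" "c \<noteq> 0" "0 < s" "0 < t"
      unfolding proj_open_segment_def by blast
    hence "z = (- c) *\<^sub>R (s *\<^sub>R (- a) + t *\<^sub>R (- b))" "- c \<noteq> 0" using e[of "- c"] by auto
    thus "z \<in> proj_open_segment (- a) (- b)" unfolding proj_open_segment_def using h by blast
  qed
qed

lemma seg_mem: "0 < s \<Longrightarrow> 0 < t \<Longrightarrow> s *\<^sub>R a + t *\<^sub>R b \<in> proj_open_segment a b"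
proof -
  assume "0 < s" "0 < t"
  moreover have "s *\<^sub>R a + t *\<^sub>R b = 1 *\<^sub>R (s *\<^sub>R a + t *\<^sub>R b)" "(1::real) \<noteq> 0" by simp_all
  ultimately show ?thesis unfolding proj_open_segment_def by blast
qed

lemma seg_cone: "z \<in> proj_open_segment a b \<Longrightarrow> c \<noteq> 0 \<Longrightarrow> c *\<^sub>R z \<in> proj_open_segment a b"
proof -
  assume "z \<in> proj_open_segment a b" "c \<noteq> 0"
  then obtain c' s t where h: "z = c' *\<^sub>R (s *\<^sub>R a + t *\<^sub>R b)" "c' \<noteq> 0" "0 < s" "0 < t"
    unfolding proj_open_segment_def by blast
  hence "c *\<^sub>R z = (c * c') *\<^sub>R (s *\<^sub>R a + t *\<^sub>R b)" "c * c' \<noteq> 0" using \<open>c \<noteq> 0\<close> by auto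
  thus "c *\<^sub>R z \<in> proj_open_segment a b" unfolding proj_open_segment_def using h by blast
qed

lemma seg_sign:
  assumes seg: "proj_open_segment a b \<subseteq> proj_closure Om"
    and s1: "0 < s1" "0 < t1" and u1: "s1 *\<^sub>R a + t1 *\<^sub>R b \<in> closure D"
    and st: "0 < s" "0 < t"
  shows "s *\<^sub>R a + t *\<^sub>R b \<in> closure D"
proof (rule ccontr)
  define z where "z = s *\<^sub>R a + t *\<^sub>R b"
  define u where "u = s1 *\<^sub>R a + t1 *\<^sub>R b"
  assume "s *\<^sub>R a + t *\<^sub>R b \<notin> closure D"
  hence zn: "z \<notin> closure D" by (simp add: z_def)
  have "z \<in> proj_closure Om" unfolding z_def by (rule subsetD[OF seg seg_mem[OF st]])
  hence "- z \<in> closure D" "z \<noteq> 0" using zn pclo_iff[of z] by blast+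
  hence fz: "f z < 0" using clD_fpos[of "-z"] fneg[of z] by simp
  have u1': "u \<in> closure D" using u1 by (simp add: u_def)
  have "u \<in> proj_closure Om" unfolding u_def by (rule subsetD[OF seg seg_mem[OF s1]])
  hence fu: "0 < f u" using clD_fpos[of u] u1' pclo_iff[of u] by blast
  define l where "l = f u / (f u - f z)"
  have l: "0 < l" "l < 1" using fu fz by (auto simp: l_def field_simps)
  define w where "w = (1 - l) *\<^sub>R u + l *\<^sub>R z"
  have weq: "w = ((1 - l) * s1 + l * s) *\<^sub>R a + ((1 - l) * t1 + l * t) *\<^sub>R b"
    by (simp add: w_def u_def z_def algebra_simps)
  have pos: "0 < (1 - l) * s1 + l * s" "0 < (1 - l) * t1 + l * t"
    using l s1 st by (simp_all add: add_pos_pos)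
  have "w \<in> proj_closure Om" unfolding weq by (rule subsetD[OF seg seg_mem[OF pos]])
  hence "f w \<noteq> 0" using pclo_iff[of w] clD_fpos[of w] clD_fpos[of "-w"] fneg[of w] by auto
  moreover have "f w = (1 - l) * f u + l * f z" by (simp add: w_def fadd fscale)
  moreover have "(1 - l) * f u + l * f z = 0" using fu fz by (simp add: l_def field_simps)
  ultimately show False by simp
qed

lemma face_bound_core:
  assumes seg: "proj_open_segment a b \<subseteq> proj_closure Om"
    and x0: "x0 = c1 *\<^sub>R (s1 *\<^sub>R a + t1 *\<^sub>R b)" "x0 \<noteq> 0"
    and y: "y = c2 *\<^sub>R (s2 *\<^sub>R a + t2 *\<^sub>R b)" "c2 \<noteq> 0"
    and pos: "0 < s1" "0 < t1" "0 < s2" "0 < t2"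
    and u1: "s1 *\<^sub>R a + t1 *\<^sub>R b \<in> closure D" and x0D: "x0 \<in> closure D"
  shows "\<exists>y' c M. y = c *\<^sub>R y' \<and> c \<noteq> 0 \<and> y' \<in> closure D \<and> 0 < M \<and>
          M *\<^sub>R x0 - y' \<in> closure D \<and> M *\<^sub>R y' - x0 \<in> closure D"
proof -
  have c1: "0 < c1"
  proof (rule ccontr)
    assume "\<not> 0 < c1"
    hence "0 \<le> - c1" by simp
    hence "(- c1) *\<^sub>R (s1 *\<^sub>R a + t1 *\<^sub>R b) \<in> closure D" using clD_scale u1 by blast
    hence "- x0 \<in> closure D" using x0 by simp
    thus False using pointed x0D x0 by blast
  qed
  define M where "M = s2 / (c1 * s1) + t2 / (c1 * t1) + c1 * s1 / s2 + c1 * t1 / t2 + 1"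
  have p: "0 < s2 / (c1 * s1)" "0 < t2 / (c1 * t1)" "0 < c1 * s1 / s2" "0 < c1 * t1 / t2"
    using pos c1 by auto
  have M1: "s2 / (c1 * s1) < M" "t2 / (c1 * t1) < M" "c1 * s1 / s2 < M" "c1 * t1 / t2 < M"
    using p by (simp_all add: M_def)
  have M2: "s2 < M * (c1 * s1)" "t2 < M * (c1 * t1)" "c1 * s1 < M * s2" "c1 * t1 < M * t2"
    using M1 pos c1 by (simp_all add: divide_less_eq)
  have "M *\<^sub>R x0 - (s2 *\<^sub>R a + t2 *\<^sub>R b) = (M * c1 * s1 - s2) *\<^sub>R a + (M * c1 * t1 - t2) *\<^sub>R b"
    by (simp add: x0 algebra_simps)
  moreover have "(M * c1 * s1 - s2) *\<^sub>R a + (M * c1 * t1 - t2) *\<^sub>R b \<in> closure D"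
    using M2 by (intro seg_sign[OF seg pos(1,2) u1]) (simp_all add: mult.assoc)
  ultimately have A: "M *\<^sub>R x0 - (s2 *\<^sub>R a + t2 *\<^sub>R b) \<in> closure D" by simp
  have "M *\<^sub>R (s2 *\<^sub>R a + t2 *\<^sub>R b) - x0 = (M * s2 - c1 * s1) *\<^sub>R a + (M * t2 - c1 * t1) *\<^sub>R b"
    by (simp add: x0 algebra_simps)
  moreover have "(M * s2 - c1 * s1) *\<^sub>R a + (M * t2 - c1 * t1) *\<^sub>R b \<in> closure D"
    using M2 by (intro seg_sign[OF seg pos(1,2) u1]) simp_all
  ultimately have B: "M *\<^sub>R (s2 *\<^sub>R a + t2 *\<^sub>R b) - x0 \<in> closure D" by simp
  have "s2 *\<^sub>R a + t2 *\<^sub>R b \<in> closure D" by (rule seg_sign[OF seg pos(1,2) u1 pos(3,4)])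
  moreover have "0 < M" using p by (simp add: M_def)
  ultimately show ?thesis using A B y by blast
qed

lemma face_bound:
  assumes x0D: "x0 \<in> closure D" "x0 \<noteq> 0" and y: "y \<in> open_face Om x0"
  shows "\<exists>y' c M. y = c *\<^sub>R y' \<and> c \<noteq> 0 \<and> y' \<in> closure D \<and> 0 < M \<and>
          M *\<^sub>R x0 - y' \<in> closure D \<and> M *\<^sub>R y' - x0 \<in> closure D"
proof -
  consider (A) c where "y = c *\<^sub>R x0" "c \<noteq> 0"
    | (B) a b where "proj_open_segment a b \<subseteq> proj_closure Om" "x0 \<in> proj_open_segment a b"
        "y \<in> proj_open_segment a b"
    using y unfolding open_face_def by blast
  thus ?thesis
  proof cases
    case A
    have "(2::real) *\<^sub>R x0 - x0 = x0" by (simp add: scaleR_2)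
    hence "y = c *\<^sub>R x0 \<and> c \<noteq> 0 \<and> x0 \<in> closure D \<and> (0::real) < 2 \<and> 2 *\<^sub>R x0 - x0 \<in> closure D \<and> 2 *\<^sub>R x0 - x0 \<in> closure D"
      using A x0D by simp
    thus ?thesis by blast
  next
    case B
    obtain c1 s1 t1 where X: "x0 = c1 *\<^sub>R (s1 *\<^sub>R a + t1 *\<^sub>R b)" "c1 \<noteq> 0" "0 < s1" "0 < t1"
      using B(2) unfolding proj_open_segment_def by blast
    obtain c2 s2 t2 where Y: "y = c2 *\<^sub>R (s2 *\<^sub>R a + t2 *\<^sub>R b)" "c2 \<noteq> 0" "0 < s2" "0 < t2"
      using B(3) unfolding proj_open_segment_def by blast
    have "s1 *\<^sub>R a + t1 *\<^sub>R b \<in> proj_closure Om" by (rule subsetD[OF B(1) seg_mem[OF X(3,4)]])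
    hence "s1 *\<^sub>R a + t1 *\<^sub>R b \<in> closure D \<or> - (s1 *\<^sub>R a + t1 *\<^sub>R b) \<in> closure D"
      using pclo_iff by blast
    thus ?thesis
    proof
      assume "s1 *\<^sub>R a + t1 *\<^sub>R b \<in> closure D"
      thus ?thesis using face_bound_core[OF B(1) X(1) x0D(2) Y(1,2) X(3,4) Y(3,4)] x0D(1) by blast
    next
      assume u: "- (s1 *\<^sub>R a + t1 *\<^sub>R b) \<in> closure D"
      have seg': "proj_open_segment (- a) (- b) \<subseteq> proj_closure Om" by (subst seg_neg) (rule B(1))
      have X': "x0 = (- c1) *\<^sub>R (s1 *\<^sub>R (- a) + t1 *\<^sub>R (- b))" using X by (simp add: algebra_simps)
      have Y': "y = (- c2) *\<^sub>R (s2 *\<^sub>R (- a) + t2 *\<^sub>R (- b))" using Y by (simp add: algebra_simps)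
      have U': "s1 *\<^sub>R (- a) + t1 *\<^sub>R (- b) \<in> closure D" using u by (simp add: algebra_simps)
      have nc2: "- c2 \<noteq> 0" using Y(2) by simp
      show ?thesis by (rule face_bound_core[OF seg' X' x0D(2) Y' nc2 X(3,4) Y(3,4) U' x0D(1)])
    qed
  qed
qed

lemma face_notOm:
  assumes x0D: "x0 \<in> closure D" "x0 \<noteq> 0" "x0 \<notin> Om" and y: "y \<in> open_face Om x0"
  shows "y \<notin> Om"
proof
  assume yO: "y \<in> Om"
  obtain y' c M where b: "y = c *\<^sub>R y'" "c \<noteq> 0" "y' \<in> closure D" "0 < M"
    "M *\<^sub>R x0 - y' \<in> closure D" using face_bound[OF x0D(1,2) y] by blast
  have "y' = (1 / c) *\<^sub>R y" using b by simp
  moreover have "(1 / c) *\<^sub>R y \<in> Om" using Om_scale[OF yO, of "1/c"] b(2) by simp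
  ultimately have "y' \<in> Om" by simp
  hence "y' \<in> D" using b clD_Om_D by blast
  hence "y' + (M *\<^sub>R x0 - y') \<in> D" using D_clD_add b by blast
  hence "M *\<^sub>R x0 \<in> D" by simp
  hence "(1 / M) *\<^sub>R (M *\<^sub>R x0) \<in> D" by (rule D_scale) (use b(4) in simp)
  hence "x0 \<in> D" using b by simp
  thus False using x0D D_Om by blast
qed

lemma face_neg: assumes "y \<in> open_face Om x0" shows "- y \<in> open_face Om x0"
proof -
  consider (A) c where "y = c *\<^sub>R x0" "c \<noteq> 0"
    | (B) a b where "y \<in> proj_closure Om" "proj_open_segment a b \<subseteq> proj_closure Om" "x0 \<in> proj_open_segment a b"
        "y \<in> proj_open_segment a b"
    using assms unfolding open_face_def by blast
  thus ?thesis
  proof cases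
    case A thus ?thesis unfolding open_face_def by (intro UnI1 CollectI exI[of _ "- c"]) auto
  next
    case B
    have "- y \<in> proj_closure Om" using B(1) pclo_iff by auto
    moreover have "- y \<in> proj_open_segment a b" using seg_cone[OF B(4), of "-1"] by simp
    ultimately show ?thesis using B unfolding open_face_def by blast
  qed
qed

lemma face_negx: "open_face Om (- x0) = open_face Om x0"
proof -
  have "{c *\<^sub>R (- x0) | c. c \<noteq> 0} = {c *\<^sub>R x0 | c. c \<noteq> 0}"
  proof (intro set_eqI iffI)
    fix z assume "z \<in> {c *\<^sub>R (- x0) | c. c \<noteq> 0}"
    then obtain c where "z = c *\<^sub>R (- x0)" "c \<noteq> 0" by blast
    thus "z \<in> {c *\<^sub>R x0 | c. c \<noteq> 0}" by (intro CollectI exI[of _ "- c"]) simp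
  next
    fix z assume "z \<in> {c *\<^sub>R x0 | c. c \<noteq> 0}"
    then obtain c where "z = c *\<^sub>R x0" "c \<noteq> 0" by blast
    thus "z \<in> {c *\<^sub>R (- x0) | c. c \<noteq> 0}" by (intro CollectI exI[of _ "- c"]) simp
  qed
  moreover have "(- x0) \<in> proj_open_segment a b \<longleftrightarrow> x0 \<in> proj_open_segment a b" for a b
    using seg_cone[of "-x0" a b "-1"] seg_cone[of x0 a b "-1"] by auto
  ultimately show ?thesis unfolding open_face_def by simp
qed

lemma lin_clD:
  assumes "\<forall>v\<in>D. g *v v \<in> closure D" "v \<in> closure D" shows "g *v v \<in> closure D"
proof -
  have "(\<lambda>v. g *v v) ` closure D \<subseteq> closure D"
    by (rule image_closure_subset) (use assms(1) in \<open>auto intro: matrix_vector_mult_linear_continuous_on\<close>)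
  thus ?thesis using assms(2) by blast
qed

lemma aut_clD:
  assumes "\<forall>v\<in>D. g *v v \<in> D" "v \<in> closure D" shows "g *v v \<in> closure D"
proof -
  have "(\<lambda>v. g *v v) ` closure D \<subseteq> closure D"
    by (rule image_closure_subset) (use assms(1) closure_subset in \<open>auto intro: matrix_vector_mult_linear_continuous_on\<close>)
  thus ?thesis using assms(2) by blast
qed

end

locale pcdC = pcd Om f for Om :: "(real^'n) set" and f +
  fixes C :: "(real^'n) set" and f' :: "real^'n \<Rightarrow> real"
  assumes CO: "C \<subseteq> Om" and Ccl: "closedin (top_of_set Om) C" and Cps: "proj_set C"
    and lin': "linear f'" and nz': "\<forall>v\<in>C. f' v \<noteq> 0" and cv': "convex (chart f' ` C)"
begin

lemma C_scale: "v \<in> C \<Longrightarrow> c \<noteq> 0 \<Longrightarrow> c *\<^sub>R v \<in> C"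
  using Cps unfolding proj_set_def by blast

lemma clC_Om: "v \<in> closure C \<Longrightarrow> v \<in> Om \<Longrightarrow> v \<in> C"
proof -
  assume a: "v \<in> closure C" "v \<in> Om"
  obtain T where T: "closed T" "C = Om \<inter> T" using Ccl closedin_closed by blast
  have "closure C \<subseteq> T" using T by (intro closure_minimal) auto
  thus ?thesis using a T by auto
qed

lemma clC_cone: assumes "v \<in> closure C" "c \<noteq> 0" shows "c *\<^sub>R v \<in> closure C"
proof -
  have "(*\<^sub>R) c ` C \<subseteq> C" using C_scale assms(2) by auto
  hence "closure ((*\<^sub>R) c ` C) \<subseteq> closure C" by (rule closure_mono)
  thus ?thesis using closure_scaleR[of c C] assms(1) by auto
qed

lemma CD_add: assumes u: "u \<in> C" "u \<in> D" and v: "v \<in> C" "v \<in> D" shows "u + v \<in> C"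
proof -
  have fu: "0 < f u" "0 < f v" using u v by (auto simp: D_def)
  define a where "a = f' u"
  define b where "b = f' v"
  have ab: "a \<noteq> 0" "b \<noteq> 0" using nz' u v by (auto simp: a_def b_def)
  have f'add: "f' (x + y) = f' x + f' y" for x y using lin' by (simp add: linear_add)
  have f'scale: "f' (c *\<^sub>R x) = c * f' x" for c x using lin' by (simp add: linear_scale)
  show ?thesis
  proof (cases "0 < a * b")
    case True
    hence s: "a + b \<noteq> 0" "0 < a / (a + b)" "a / (a + b) \<le> 1"
      by (auto simp: zero_less_mult_iff field_simps)
    define l where "l = a / (a + b)"
    have "l *\<^sub>R chart f' u + (1 - l) *\<^sub>R chart f' v \<in> chart f' ` C"
      using s u v by (intro convexD[OF cv']) (auto simp: l_def)
    then obtain w where w: "w \<in> C" "l *\<^sub>R chart f' u + (1 - l) *\<^sub>R chart f' v = chart f' w" by auto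
    have "l *\<^sub>R chart f' u + (1 - l) *\<^sub>R chart f' v = (1 / (a + b)) *\<^sub>R (u + v)"
      using s ab by (simp add: chart_def l_def a_def[symmetric] b_def[symmetric] field_simps scaleR_add_right)
    hence "(1 / (a + b)) *\<^sub>R (u + v) = (1 / f' w) *\<^sub>R w" using w by (simp add: chart_def)
    hence "(a + b) *\<^sub>R ((1 / (a + b)) *\<^sub>R (u + v)) = (a + b) *\<^sub>R ((1 / f' w) *\<^sub>R w)" by simp
    hence "u + v = ((a + b) / f' w) *\<^sub>R w" using s by simp
    moreover have "(a + b) / f' w \<noteq> 0" using s nz' w by auto
    ultimately show ?thesis using C_scale w by metis
  next
    case False
    hence ab': "a * b < 0" using ab by (simp add: not_less mult_eq_0_iff) (metis ab(1) ab(2) mult_eq_0_iff order_le_less)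
    define al where "al = f u / a"
    define be where "be = f v / b"
    have abs: "al * be < 0" using ab' fu by (auto simp: al_def be_def mult_less_0_iff divide_less_0_iff zero_less_divide_iff)
    hence bma: "be - al \<noteq> 0" by auto
    define l where "l = be / (be - al)"
    have l: "0 \<le> l" "l \<le> 1" using abs by (auto simp: l_def mult_less_0_iff field_simps)
    have "l *\<^sub>R chart f' u + (1 - l) *\<^sub>R chart f' v \<in> chart f' ` C"
      using l u v by (intro convexD[OF cv']) auto
    then obtain w where w: "w \<in> C" "l *\<^sub>R chart f' u + (1 - l) *\<^sub>R chart f' v = chart f' w" by auto
    have "chart f' w \<in> Om" unfolding chart_def using nz' w CO by (intro Om_scale) auto
    hence "f (chart f' w) \<noteq> 0" using nz by blast
    moreover have "f (l *\<^sub>R chart f' u + (1 - l) *\<^sub>R chart f' v) = l * al + (1 - l) * be"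
      by (simp add: chart_def fadd fscale al_def be_def a_def b_def)
    moreover have "l * al + (1 - l) * be = 0" using bma by (simp add: l_def field_simps)
    ultimately show ?thesis using w by simp
  qed
qed

lemma CD_sub_Om: "C \<inter> D \<subseteq> Om" using CO by auto

lemma clC_clCD: assumes "v \<in> closure C" "v \<in> closure D" "v \<noteq> 0" shows "v \<in> closure (C \<inter> D)"
proof -
  have "C = (C \<inter> D) \<union> (C \<inter> (\<lambda>v. - v) ` D)" using CO Om_eq by auto
  hence "closure C = closure (C \<inter> D) \<union> closure (C \<inter> (\<lambda>v. - v) ` D)"
    by (metis closure_Un)
  moreover have "closure (C \<inter> (\<lambda>v. - v) ` D) \<subseteq> (\<lambda>v. - v) ` closure D"
    using closure_mono[of "C \<inter> (\<lambda>v. - v) ` D" "(\<lambda>v. - v) ` D"] closure_neg by auto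
  moreover have "v \<notin> (\<lambda>v. - v) ` closure D"
  proof
    assume "v \<in> (\<lambda>v. - v) ` closure D"
    hence "- v \<in> closure D" by auto
    thus False using pointed assms by blast
  qed
  ultimately show ?thesis using assms(1) by blast
qed

lemma seg_CD: assumes q: "q \<in> closure (C \<inter> D)" and p: "p \<in> C" "p \<in> D" and ab: "0 \<le> a" "0 < b"
  shows "a *\<^sub>R q + b *\<^sub>R p \<in> C \<and> a *\<^sub>R q + b *\<^sub>R p \<in> D"
proof -
  have bp: "b *\<^sub>R p \<in> C" "b *\<^sub>R p \<in> D" using p ab C_scale D_scale by auto
  have aq: "a *\<^sub>R q \<in> closure (C \<inter> D)"
  proof (cases "a = 0")
    case True
    have "(\<lambda>n. inverse (real (Suc n)) *\<^sub>R p) \<longlonglongrightarrow> 0 *\<^sub>R p"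
      by (intro tendsto_scaleR LIMSEQ_inverse_real_of_nat tendsto_const)
    moreover have "\<forall>n. inverse (real (Suc n)) *\<^sub>R p \<in> C \<inter> D" using p C_scale D_scale by auto
    ultimately show ?thesis unfolding closure_sequential using True by auto
  next
    case False
    have "(*\<^sub>R) a ` (C \<inter> D) \<subseteq> C \<inter> D" using C_scale D_scale False ab by auto
    hence "closure ((*\<^sub>R) a ` (C \<inter> D)) \<subseteq> closure (C \<inter> D)" by (rule closure_mono)
    thus ?thesis using closure_scaleR[of a "C \<inter> D"] q by auto
  qed
  have "(+) (b *\<^sub>R p) ` (C \<inter> D) \<subseteq> C \<inter> D"
    using bp CD_add D_add by (auto simp: add.commute)
  hence "closure ((+) (b *\<^sub>R p) ` (C \<inter> D)) \<subseteq> closure (C \<inter> D)" by (rule closure_mono)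
  hence "b *\<^sub>R p + a *\<^sub>R q \<in> closure (C \<inter> D)" using closure_translation[of "b *\<^sub>R p" "C \<inter> D"] aq by auto
  hence inC: "a *\<^sub>R q + b *\<^sub>R p \<in> closure C" using closure_mono[of "C \<inter> D" C] by (auto simp: add.commute)
  have "a *\<^sub>R q \<in> closure D" using aq closure_mono[of "C \<inter> D" D] by auto
  hence inD: "a *\<^sub>R q + b *\<^sub>R p \<in> D" using D_clD_add[OF bp(2)] by (simp add: add.commute)
  thus ?thesis using inC clC_Om D_Om by blast
qed

end

lemma inv_props: assumes "invertible (g :: real^'n^'n)"
  shows "g ** matrix_inv g = mat 1" "matrix_inv g ** g = mat 1"
proof -
  have "\<exists>A'. g ** A' = mat 1 \<and> A' ** g = mat 1" using assms unfolding invertible_def by blast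
  hence "g ** matrix_inv g = mat 1 \<and> matrix_inv g ** g = mat 1"
    unfolding matrix_inv_def by (rule someI_ex)
  thus "g ** matrix_inv g = mat 1" "matrix_inv g ** g = mat 1" by auto
qed

locale mainloc = pcdC Om f C f' for Om :: "(real^'n) set" and f C f' +
  fixes G :: "(real^'n^'n) set" and K :: "(real^'n) set" and x0 p :: "real^'n"
  assumes Gsub: "pgl_subgroup G"
    and Gstab: "\<forall>g\<in>G. (\<lambda>v. g *v v) ` Om = Om \<and> (\<lambda>v. g *v v) ` C = C"
    and Kc: "compact K" and KC: "K \<subseteq> C" and CK: "C = {g *v k | g k. g \<in> G \<and> k \<in> K}"
    and x0C: "x0 \<in> closure C" and x0D: "x0 \<in> closure D" and x0nz: "x0 \<noteq> 0" and x0nC: "x0 \<notin> C"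
    and pC: "p \<in> C" and pD: "p \<in> D"
begin

lemma G_scale: "g \<in> G \<Longrightarrow> c \<noteq> 0 \<Longrightarrow> c *\<^sub>R g \<in> G"
  using Gsub unfolding pgl_subgroup_def by blast
lemma G_inv: "g \<in> G \<Longrightarrow> matrix_inv g \<in> G"
  using Gsub unfolding pgl_subgroup_def by blast
lemma G_invertible: "g \<in> G \<Longrightarrow> invertible g"
  using Gsub unfolding pgl_subgroup_def by blast
lemma G_Om: "g \<in> G \<Longrightarrow> (\<lambda>v. g *v v) ` Om = Om" using Gstab by blast
lemma G_C: "g \<in> G \<Longrightarrow> v \<in> C \<Longrightarrow> g *v v \<in> C" using Gstab by blast

lemma x0nO: "x0 \<notin> Om" using x0C x0nC clC_Om by blast

lemma main_result:
  "\<exists>T \<in> closure G. T \<noteq> 0 \<and>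
           (\<forall>v\<in>Om. T *v v \<noteq> 0) \<and>
           (\<lambda>v. T *v v) ` Om = open_face Om x0 \<and>
           (\<lambda>v. T *v v) ` C = open_face Om x0 \<inter> ideal_boundary C"
proof -
  define t where "t n = inverse (real (Suc (Suc n)))" for n
  have t0: "0 < t n" "t n < 1" for n by (auto simp: t_def inverse_less_1_iff)
  have tlim: "t \<longlonglongrightarrow> 0" unfolding t_def by (rule LIMSEQ_Suc[OF LIMSEQ_inverse_real_of_nat])
  define c where "c n = (1 - t n) *\<^sub>R x0 + t n *\<^sub>R p" for n
  have x0CD: "x0 \<in> closure (C \<inter> D)" using clC_clCD x0C x0D x0nz by blast
  have cCD: "c n \<in> C \<and> c n \<in> D" for n
    unfolding c_def using seg_CD[OF x0CD pC pD] t0[of n] by simp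
  have clim: "c \<longlonglongrightarrow> x0"
  proof -
    have "(\<lambda>n. (1 - t n) *\<^sub>R x0 + t n *\<^sub>R p) \<longlonglongrightarrow> (1 - 0) *\<^sub>R x0 + 0 *\<^sub>R p"
      by (intro tendsto_intros tlim)
    thus ?thesis by (simp add: c_def[abs_def])
  qed
  have "\<forall>n. \<exists>gk. fst gk \<in> G \<and> snd gk \<in> K \<and> c n = fst gk *v snd gk"
  proof
    fix n
    have "c n \<in> {g *v k | g k. g \<in> G \<and> k \<in> K}" using cCD CK by blast
    then obtain g k where "g \<in> G" "k \<in> K" "c n = g *v k" by blast
    thus "\<exists>gk. fst gk \<in> G \<and> snd gk \<in> K \<and> c n = fst gk *v snd gk" by (intro exI[of _ "(g, k)"]) simp
  qed
  then obtain gk where gk0: "\<forall>n. fst (gk n) \<in> G \<and> snd (gk n) \<in> K \<and> c n = fst (gk n) *v snd (gk n)"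
    by (rule choice[THEN exE])
  define g where "g n = fst (gk n)" for n
  define k where "k n = snd (gk n)" for n
  have gk: "\<And>n. g n \<in> G" "\<And>n. k n \<in> K" "\<And>n. c n = g n *v k n"
    using gk0 by (auto simp: g_def k_def)
  define \<sigma> where "\<sigma> n = (if 0 < f (g n *v p) then 1 else (-1::real))" for n
  have \<sigma>: "\<sigma> n \<noteq> 0" "\<sigma> n * \<sigma> n = 1" for n by (auto simp: \<sigma>_def)
  define h where "h n = \<sigma> n *\<^sub>R g n" for n
  define \<kappa> where "\<kappa> n = \<sigma> n *\<^sub>R k n" for n
  define m where "m n = \<sigma> n *\<^sub>R matrix_inv (g n)" for n
  have hG: "h n \<in> G" for n using G_scale gk \<sigma> by (simp add: h_def)
  have mG: "m n \<in> G" for n using G_scale G_inv gk \<sigma> by (simp add: m_def)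
  have ch: "c n = h n *v \<kappa> n" for n
    using gk(3)[of n] \<sigma>(2)[of n] by (simp add: h_def \<kappa>_def matrix_vector_mult_scaleR scaleR_matrix_vector_assoc[symmetric])
  have mh: "m n *v (h n *v v) = v" "h n *v (m n *v v) = v" for n v
  proof -
    have i: "g n ** matrix_inv (g n) = mat 1" "matrix_inv (g n) ** g n = mat 1"
      using inv_props G_invertible gk(1) by blast+
    have "m n *v (h n *v v) = (\<sigma> n * \<sigma> n) *\<^sub>R (matrix_inv (g n) *v (g n *v v))"
      by (simp add: m_def h_def scaleR_matrix_vector_assoc[symmetric] matrix_vector_mult_scaleR del: matrix_vector_mul_assoc)
    thus "m n *v (h n *v v) = v" using i \<sigma>(2)[of n] by (simp add: matrix_vector_mul_assoc)
    have "h n *v (m n *v v) = (\<sigma> n * \<sigma> n) *\<^sub>R (g n *v (matrix_inv (g n) *v v))"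
      by (simp add: m_def h_def scaleR_matrix_vector_assoc[symmetric] matrix_vector_mult_scaleR del: matrix_vector_mul_assoc)
    thus "h n *v (m n *v v) = v" using i \<sigma>(2)[of n] by (simp add: matrix_vector_mul_assoc)
  qed
  have hD: "\<forall>v\<in>D. h n *v v \<in> D" for n
  proof
    fix v assume v: "v \<in> D"
    have "g n *v p \<in> Om" using G_Om[OF gk(1)[of n]] pD D_Om by blast
    hence "f (g n *v p) \<noteq> 0" using nz by blast
    hence "0 < f (h n *v p)" by (auto simp: h_def \<sigma>_def fscale matrix_vector_mult_scaleR scaleR_matrix_vector_assoc[symmetric])
    thus "h n *v v \<in> D" using aut_D[OF G_Om[OF hG] pD _ v] by blast
  qed
  have mD: "\<forall>v\<in>D. m n *v v \<in> D" for n
  proof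
    fix v assume v: "v \<in> D"
    have "h n *v p \<in> D" using hD pD by blast
    hence "0 < f (m n *v (h n *v p))" using mh pD by (simp add: D_def)
    thus "m n *v v \<in> D" using aut_D[OF G_Om[OF mG] _ _ v] \<open>h n *v p \<in> D\<close> by blast
  qed
  have m\<kappa>: "m n *v c n = \<kappa> n" for n using mh(1) ch by simp
  have \<kappa>D: "\<kappa> n \<in> D" for n using mD cCD m\<kappa> by metis
  define K' where "K' = K \<union> (\<lambda>v. - v) ` K"
  have K'c: "compact K'" unfolding K'_def using Kc compact_negations by blast
  have K'C: "K' \<subseteq> C" unfolding K'_def using KC C_scale[of _ "-1"] by auto
  have \<kappa>K: "\<kappa> n \<in> K'" for n unfolding K'_def \<kappa>_def \<sigma>_def using gk(2)[of n] by auto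
  have hnz: "h n \<noteq> 0" for n
  proof
    assume "h n = 0"
    hence "p = 0" using mh(1)[of n p] by simp
    thus False using pD D_Om zero_notin by blast
  qed
  define N where "N n = norm (h n)" for n
  have Npos: "0 < N n" for n using hnz by (simp add: N_def)
  define A where "A n = (1 / N n) *\<^sub>R h n" for n
  have AG: "A n \<in> G" for n using G_scale[OF hG[of n], of "1 / N n"] Npos[of n] by (simp add: A_def)
  have An: "norm (A n) = 1" for n using Npos by (simp add: A_def N_def)
  have Ac: "A n *v v = (1 / N n) *\<^sub>R (h n *v v)" for n v
    by (simp add: A_def scaleR_matrix_vector_assoc)
  define F where "F n = (\<kappa> n, A n)" for n
  have "compact (K' \<times> sphere (0::real^'n^'n) 1)" by (intro compact_Times K'c compact_sphere)
  moreover have "\<forall>n. F n \<in> K' \<times> sphere 0 1" using \<kappa>K An by (simp add: F_def)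
  ultimately have "\<exists>l\<in>K' \<times> sphere 0 1. \<exists>r. strict_mono r \<and> (F \<circ> r) \<longlonglongrightarrow> l"
    unfolding compact_def by blast
  then obtain l r where l: "l \<in> K' \<times> sphere 0 1" "strict_mono r" "(F \<circ> r) \<longlonglongrightarrow> l"
    by blast
  define k0 where "k0 = fst l"
  define T where "T = snd l"
  have klim: "(\<lambda>n. \<kappa> (r n)) \<longlonglongrightarrow> k0"
    using tendsto_fst[OF l(3)] by (simp add: F_def k0_def o_def)
  have Tlim: "(\<lambda>n. A (r n)) \<longlonglongrightarrow> T"
    using tendsto_snd[OF l(3)] by (simp add: F_def T_def o_def)
  have k0K: "k0 \<in> K'" using l(1) unfolding k0_def mem_Times_iff by blast
  have "T \<in> sphere 0 1" using l(1) unfolding T_def mem_Times_iff by blast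
  hence Tn: "norm T = 1" by simp
  have TG: "T \<in> closure G" unfolding closure_sequential
    by (rule exI[of _ "\<lambda>n. A (r n)"]) (simp add: Tlim AG)
  have Tnz: "T \<noteq> 0" using Tn by auto
  have k0C: "k0 \<in> C" using k0K K'C by blast
  have k0D: "k0 \<in> D"
  proof -
    have "k0 \<in> closure D" unfolding closure_sequential
      by (rule exI[of _ "\<lambda>n. \<kappa> (r n)"]) (simp add: klim \<kappa>D)
    thus ?thesis using clD_Om_D k0C CO by blast
  qed
  have AD: "A n *v v \<in> D" if "v \<in> D" for n v
    using hD that Npos D_scale by (simp add: Ac)
  have TD: "T *v v \<in> closure D" if "v \<in> D" for v
  proof -
    have "(\<lambda>n. A (r n) *v v) \<longlonglongrightarrow> T *v v" by (rule tendsto_mv[OF Tlim tendsto_const])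
    thus ?thesis unfolding closure_sequential
      by (intro exI[of _ "\<lambda>n. A (r n) *v v"]) (simp add: AD that)
  qed
  have TclD: "T *v v \<in> closure D" if "v \<in> closure D" for v
    using lin_clD TD that by blast
  have TnzD: "T *v v \<noteq> 0" if v: "v \<in> D" for v
  proof
    assume Tv: "T *v v = 0"
    have "T *v w = 0" for w
    proof -
      obtain e where e: "e > 0" "ball v e \<subseteq> D" using D_open v open_contains_ball by blast
      define \<epsilon> where "\<epsilon> = e / (2 * (norm w + 1))"
      have q: "norm w / (norm w + 1) < 1" by (simp add: divide_less_eq add_pos_nonneg not_less add_nonneg_nonneg)
      have "\<epsilon> * norm w = (e / 2) * (norm w / (norm w + 1))" by (simp add: \<epsilon>_def field_simps)
      also have "\<dots> \<le> e / 2" by (rule mult_left_le) (use q e(1) in auto)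
      finally have le: "\<epsilon> * norm w \<le> e / 2" .
      have "0 < 2 * (norm w + 1)" by (simp add: add_nonneg_pos)
      hence "0 < \<epsilon>" using e(1) unfolding \<epsilon>_def by (simp add: divide_pos_pos)
      moreover have "\<epsilon> * norm w < e" using le e(1) by linarith
      ultimately have \<epsilon>: "0 < \<epsilon>" "\<epsilon> * norm w < e" by auto
      have "v + \<epsilon> *\<^sub>R w \<in> ball v e" "v - \<epsilon> *\<^sub>R w \<in> ball v e"
        using \<epsilon> by (auto simp: dist_norm)
      hence "v + \<epsilon> *\<^sub>R w \<in> D" "v - \<epsilon> *\<^sub>R w \<in> D" using e by auto
      hence "T *v (v + \<epsilon> *\<^sub>R w) \<in> closure D" "T *v (v - \<epsilon> *\<^sub>R w) \<in> closure D" using TD by blast+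
      hence "\<epsilon> *\<^sub>R (T *v w) \<in> closure D" "- (\<epsilon> *\<^sub>R (T *v w)) \<in> closure D"
        using Tv by (simp_all add: matrix_vector_right_distrib matrix_vector_mult_diff_distrib matrix_vector_mult_scaleR)
      hence "\<epsilon> *\<^sub>R (T *v w) = 0" using pointed by blast
      thus ?thesis using \<epsilon> by simp
    qed
    hence "T = 0" by (simp add: matrix_eq)
    thus False using Tnz by simp
  qed
  have TnzO: "T *v v \<noteq> 0" if "v \<in> Om" for v
  proof -
    have "v \<in> D \<or> - v \<in> D" using that Om_D by blast
    thus ?thesis using TnzD[of v] TnzD[of "-v"] by (auto simp: vec.neg)
  qed
  have TpO: "T *v v \<in> proj_closure Om" if "v \<in> Om" for v
  proof -
    have "v \<in> D \<or> - v \<in> D" using that Om_D by blast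
    hence "T *v v \<in> closure D \<or> - (T *v v) \<in> closure D" using TD[of v] TD[of "-v"] by (auto simp: vec.neg)
    thus ?thesis using TnzO that pclo_iff by blast
  qed
  have Akc: "A n *v \<kappa> n = (1 / N n) *\<^sub>R c n" for n by (simp add: Ac ch)
  have lim1: "(\<lambda>n. A (r n) *v \<kappa> (r n)) \<longlonglongrightarrow> T *v k0" by (rule tendsto_mv[OF Tlim klim])
  have cnz: "c n \<noteq> 0" for n using cCD[of n] zero_notin D_Om by metis
  have climr: "(\<lambda>n. c (r n)) \<longlonglongrightarrow> x0" using LIMSEQ_subseq_LIMSEQ[OF clim l(2)] by (simp add: o_def)
  have lim2: "(\<lambda>n. norm (c (r n))) \<longlonglongrightarrow> norm x0" by (rule tendsto_norm[OF climr])
  have lim3: "(\<lambda>n. norm (A (r n) *v \<kappa> (r n))) \<longlonglongrightarrow> norm (T *v k0)" by (rule tendsto_norm[OF lim1])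
  define \<rho> where "\<rho> = norm (T *v k0) / norm x0"
  have eqN: "norm (A (r n) *v \<kappa> (r n)) / norm (c (r n)) = 1 / N (r n)" for n
    using Npos[of "r n"] cnz[of "r n"] by (simp add: Akc)
  have Nlim: "(\<lambda>n. 1 / N (r n)) \<longlonglongrightarrow> \<rho>"
    using tendsto_divide[OF lim3 lim2] x0nz unfolding eqN \<rho>_def by simp
  have Tk0nz: "T *v k0 \<noteq> 0" using TnzD k0D by blast
  have \<rho>pos: "0 < \<rho>" using Tk0nz x0nz by (simp add: \<rho>_def)
  have "(\<lambda>n. (1 / N (r n)) *\<^sub>R c (r n)) \<longlonglongrightarrow> \<rho> *\<^sub>R x0" by (rule tendsto_scaleR[OF Nlim climr])
  hence "(\<lambda>n. A (r n) *v \<kappa> (r n)) \<longlonglongrightarrow> \<rho> *\<^sub>R x0" by (simp add: Akc)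
  hence Tk0: "T *v k0 = \<rho> *\<^sub>R x0" using lim1 LIMSEQ_unique by blast
  define w0 where "w0 = (1 / \<rho>) *\<^sub>R k0"
  have w0D: "w0 \<in> D" using D_scale k0D \<rho>pos by (simp add: w0_def)
  have Tw0: "T *v w0 = x0" using \<rho>pos by (simp add: w0_def matrix_vector_mult_scaleR Tk0)
  have core: "\<exists>u\<in>D. T *v u = \<rho> *\<^sub>R y' \<and> (y' \<in> closure (C \<inter> D) \<longrightarrow> u \<in> C)"
    if y'D: "y' \<in> closure D" and M: "0 < M" "M *\<^sub>R x0 - y' \<in> closure D" "M *\<^sub>R y' - x0 \<in> closure D"
    for y' M
  proof -
    define M2 where "M2 = max M 1"
    define \<gamma> where "\<gamma> = 1 / M2"
    have M2: "1 \<le> M2" "M \<le> M2" by (auto simp: M2_def)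
    have \<gamma>: "0 < \<gamma>" "\<gamma> \<le> 1" "\<gamma> * M2 = 1" using M2 by (auto simp: \<gamma>_def)
    define yy where "yy n = (1 - t n) *\<^sub>R y' + t n *\<^sub>R p" for n
    have pcl: "p \<in> closure D" using pD D_clD by blast
    have yyD: "yy n \<in> D" for n
    proof -
      have "t n *\<^sub>R p + (1 - t n) *\<^sub>R y' \<in> D"
        using t0[of n] by (intro D_clD_add D_scale pD clD_scale y'D) auto
      thus ?thesis by (simp add: yy_def add.commute)
    qed
    have up: "M2 *\<^sub>R c n - yy n \<in> closure D" for n
    proof -
      have eq: "M2 *\<^sub>R c n - yy n = (1 - t n) *\<^sub>R (M2 *\<^sub>R x0 - y') + (t n * (M2 - 1)) *\<^sub>R p"
        by (simp add: c_def yy_def algebra_simps)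
      have eq2: "M2 *\<^sub>R x0 - y' = (M2 - M) *\<^sub>R x0 + (M *\<^sub>R x0 - y')" by (simp add: algebra_simps)
      have "M2 *\<^sub>R x0 - y' \<in> closure D" unfolding eq2 using M2 by (intro clD_add clD_scale x0D M(2)) auto
      thus ?thesis unfolding eq using t0[of n] M2 by (intro clD_add clD_scale pcl) auto
    qed
    have lo: "yy n - \<gamma> *\<^sub>R c n \<in> closure D" for n
    proof -
      have eq: "yy n - \<gamma> *\<^sub>R c n = (1 - t n) *\<^sub>R (y' - \<gamma> *\<^sub>R x0) + (t n * (1 - \<gamma>)) *\<^sub>R p"
        by (simp add: c_def yy_def algebra_simps)
      have "\<gamma> *\<^sub>R ((M2 - M) *\<^sub>R y' + (M *\<^sub>R y' - x0)) = (\<gamma> * M2) *\<^sub>R y' - \<gamma> *\<^sub>R x0"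
        by (simp add: algebra_simps)
      hence eq2: "y' - \<gamma> *\<^sub>R x0 = \<gamma> *\<^sub>R ((M2 - M) *\<^sub>R y' + (M *\<^sub>R y' - x0))" using \<gamma>(3) by simp
      have "y' - \<gamma> *\<^sub>R x0 \<in> closure D" unfolding eq2 using M2 \<gamma> by (intro clD_add clD_scale y'D M(3)) auto
      thus ?thesis unfolding eq using t0[of n] \<gamma> by (intro clD_add clD_scale pcl) auto
    qed
    define uu where "uu n = m n *v yy n" for n
    have uuD: "uu n \<in> D" for n using mD yyD by (simp add: uu_def)
    have mcl: "\<forall>v\<in>D. m n *v v \<in> closure D" for n using mD D_clD by blast
    have uup: "M2 *\<^sub>R \<kappa> n - uu n \<in> closure D" for n
    proof -
      have "M2 *\<^sub>R \<kappa> n - uu n = m n *v (M2 *\<^sub>R c n - yy n)"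
        by (simp add: uu_def matrix_vector_mult_diff_distrib matrix_vector_mult_scaleR m\<kappa>)
      thus ?thesis using lin_clD[OF mcl up] by simp
    qed
    have ulo: "uu n - \<gamma> *\<^sub>R \<kappa> n \<in> closure D" for n
    proof -
      have "uu n - \<gamma> *\<^sub>R \<kappa> n = m n *v (yy n - \<gamma> *\<^sub>R c n)"
        by (simp add: uu_def matrix_vector_mult_diff_distrib matrix_vector_mult_scaleR m\<kappa>)
      thus ?thesis using lin_clD[OF mcl lo] by simp
    qed
    obtain R where R: "R > 0" "\<forall>v\<in>closure D. norm v \<le> R * f v" using R_ex by blast
    obtain B where B: "B > 0" "\<forall>z. norm (f z) \<le> norm z * B"
      using bounded_linear.pos_bounded[OF fbl] by blast
    obtain Bk where Bk: "\<forall>z\<in>K'. norm z \<le> Bk"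
      using compact_imp_bounded[OF K'c] unfolding bounded_iff by blast
    have ubd: "norm (uu n) \<le> R * (M2 * (Bk * B))" for n
    proof -
      have "0 \<le> f (M2 *\<^sub>R \<kappa> n - uu n)" using clD_f uup by blast
      hence a: "f (uu n) \<le> M2 * f (\<kappa> n)" by (simp add: fdiff fscale)
      have "f (\<kappa> n) \<le> norm (\<kappa> n) * B" using B(2)[rule_format, of "\<kappa> n"] by simp
      also have "\<dots> \<le> Bk * B" using Bk \<kappa>K B(1) by (simp add: mult_right_mono)
      finally have b: "f (\<kappa> n) \<le> Bk * B" .
      have "norm (uu n) \<le> R * f (uu n)" using R uuD D_clD by blast
      also have "\<dots> \<le> R * (M2 * f (\<kappa> n))" using a R(1) by simp
      also have "\<dots> \<le> R * (M2 * (Bk * B))" using b R(1) M2 by simp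
      finally show ?thesis .
    qed
    have cp: "compact (cball (0::real^'n) (R * (M2 * (Bk * B))))" by simp
    have ub: "\<forall>n. uu (r n) \<in> cball 0 (R * (M2 * (Bk * B)))" using ubd by simp
    have "\<exists>u\<in>cball 0 (R * (M2 * (Bk * B))). \<exists>r2. strict_mono r2 \<and> ((\<lambda>n. uu (r n)) \<circ> r2) \<longlonglongrightarrow> u"
      using mp[OF spec[OF cp[unfolded compact_def], of "\<lambda>n. uu (r n)"] ub] .
    then obtain u r2 where r2: "strict_mono r2" and ulim0: "((\<lambda>n. uu (r n)) \<circ> r2) \<longlonglongrightarrow> u" by blast
    have ulim: "(\<lambda>n. uu (r (r2 n))) \<longlonglongrightarrow> u" using ulim0 by (simp add: o_def)
    have klim2: "(\<lambda>n. \<kappa> (r (r2 n))) \<longlonglongrightarrow> k0" using LIMSEQ_subseq_LIMSEQ[OF klim r2] by (simp add: o_def)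
    have Tlim2: "(\<lambda>n. A (r (r2 n))) \<longlonglongrightarrow> T" using LIMSEQ_subseq_LIMSEQ[OF Tlim r2] by (simp add: o_def)
    have Nlim2: "(\<lambda>n. 1 / N (r (r2 n))) \<longlonglongrightarrow> \<rho>" using LIMSEQ_subseq_LIMSEQ[OF Nlim r2] by (simp add: o_def)
    have yylim: "yy \<longlonglongrightarrow> y'"
    proof -
      have "(\<lambda>n. (1 - t n) *\<^sub>R y' + t n *\<^sub>R p) \<longlonglongrightarrow> (1 - 0) *\<^sub>R y' + 0 *\<^sub>R p"
        by (intro tendsto_intros tlim)
      thus ?thesis by (simp add: yy_def[abs_def])
    qed
    have yylim2: "(\<lambda>n. yy (r (r2 n))) \<longlonglongrightarrow> y'"
      using LIMSEQ_subseq_LIMSEQ[OF LIMSEQ_subseq_LIMSEQ[OF yylim l(2)] r2] by (simp add: o_def)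
    have "(\<lambda>n. uu (r (r2 n)) - \<gamma> *\<^sub>R \<kappa> (r (r2 n))) \<longlonglongrightarrow> u - \<gamma> *\<^sub>R k0"
      by (intro tendsto_intros ulim klim2)
    hence "u - \<gamma> *\<^sub>R k0 \<in> closure D"
      by (rule closed_sequentially[OF closed_closure, rotated]) (simp add: ulo)
    hence "\<gamma> *\<^sub>R k0 + (u - \<gamma> *\<^sub>R k0) \<in> D" using D_clD_add D_scale[OF k0D \<gamma>(1)] by blast
    hence uD: "u \<in> D" by simp
    have "(\<lambda>n. A (r (r2 n)) *v uu (r (r2 n))) \<longlonglongrightarrow> T *v u" by (rule tendsto_mv[OF Tlim2 ulim])
    moreover have "A n *v uu n = (1 / N n) *\<^sub>R yy n" for n by (simp add: Ac uu_def mh)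
    ultimately have "(\<lambda>n. (1 / N (r (r2 n))) *\<^sub>R yy (r (r2 n))) \<longlonglongrightarrow> T *v u" by simp
    moreover have "(\<lambda>n. (1 / N (r (r2 n))) *\<^sub>R yy (r (r2 n))) \<longlonglongrightarrow> \<rho> *\<^sub>R y'"
      by (rule tendsto_scaleR[OF Nlim2 yylim2])
    ultimately have Tu: "T *v u = \<rho> *\<^sub>R y'" using LIMSEQ_unique by blast
    have "u \<in> C" if yCD: "y' \<in> closure (C \<inter> D)"
    proof -
      have "yy n \<in> C" for n unfolding yy_def using seg_CD[OF yCD pC pD] t0[of n] by simp
      hence uuC: "uu n \<in> C" for n using G_C[OF mG] by (simp add: uu_def)
      have "u \<in> closure C" unfolding closure_sequential
        by (intro exI[of _ "\<lambda>n. uu (r (r2 n))"]) (simp add: uuC ulim)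
      thus ?thesis using clC_Om uD D_Om by blast
    qed
    thus ?thesis using uD Tu by blast
  qed
  have face1: "T *v v \<in> open_face Om x0" if vD: "v \<in> D" for v
  proof -
    obtain e1 where e1: "e1 > 0" "ball v e1 \<subseteq> D" using D_open vD open_contains_ball by blast
    obtain e2 where e2: "e2 > 0" "ball w0 e2 \<subseteq> D" using D_open w0D open_contains_ball by blast
    define e where "e = min e1 e2"
    have e: "0 < e" "e \<le> e1" "e \<le> e2" using e1 e2 by (auto simp: e_def)
    define \<epsilon> where "\<epsilon> = e / (2 * (norm (v - w0) + 1))"
    have q: "norm (v - w0) / (norm (v - w0) + 1) < 1" by (simp add: divide_less_eq add_pos_nonneg not_less add_nonneg_nonneg)
    have "\<epsilon> * norm (v - w0) = (e / 2) * (norm (v - w0) / (norm (v - w0) + 1))" by (simp add: \<epsilon>_def field_simps)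
    also have "\<dots> \<le> e / 2" by (rule mult_left_le) (use q e(1) in auto)
    finally have le: "\<epsilon> * norm (v - w0) \<le> e / 2" .
    have "0 < 2 * (norm (v - w0) + 1)" by (simp add: add_nonneg_pos)
    hence \<epsilon>0: "0 < \<epsilon>" using e(1) unfolding \<epsilon>_def by (simp add: divide_pos_pos)
    have \<epsilon>1: "\<epsilon> * norm (v - w0) < e" using le e(1) by linarith
    define a' where "a' = v + \<epsilon> *\<^sub>R (v - w0)"
    define b' where "b' = w0 + \<epsilon> *\<^sub>R (w0 - v)"
    have "dist v a' < e1" using \<epsilon>0 \<epsilon>1 e by (simp add: a'_def dist_norm)
    hence a'D: "a' \<in> D" using e1 by auto
    have "norm (w0 - v) = norm (v - w0)" by (rule norm_minus_commute)
    hence "dist w0 b' < e2" using \<epsilon>0 \<epsilon>1 e by (simp add: b'_def dist_norm)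
    hence b'D: "b' \<in> D" using e2 by auto
    define s0 where "s0 = \<epsilon> / (1 + 2 * \<epsilon>)"
    define t0' where "t0' = (1 + \<epsilon>) / (1 + 2 * \<epsilon>)"
    have st0: "0 < s0" "0 < t0'" using \<epsilon>0 by (auto simp: s0_def t0'_def)
    have d: "1 + 2 * \<epsilon> \<noteq> 0" using \<epsilon>0 by simp
    have h1: "s0 * (1 + 2 * \<epsilon>) = \<epsilon>" and h2: "t0' * (1 + 2 * \<epsilon>) = 1 + \<epsilon>"
      using d by (simp_all add: s0_def t0'_def)
    have "(s0 + s0 * \<epsilon> - t0' * \<epsilon>) * (1 + 2 * \<epsilon>) = (s0 * (1 + 2 * \<epsilon>)) * (1 + \<epsilon>) - (t0' * (1 + 2 * \<epsilon>)) * \<epsilon>"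
      by (simp add: algebra_simps)
    also have "\<dots> = \<epsilon> * (1 + \<epsilon>) - (1 + \<epsilon>) * \<epsilon>" by (simp only: h1 h2)
    also have "\<dots> = 0" by simp
    finally have co1: "s0 + s0 * \<epsilon> - t0' * \<epsilon> = 0" using d by simp
    have "(t0' + t0' * \<epsilon> - s0 * \<epsilon>) * (1 + 2 * \<epsilon>) = (t0' * (1 + 2 * \<epsilon>)) * (1 + \<epsilon>) - (s0 * (1 + 2 * \<epsilon>)) * \<epsilon>"
      by (simp add: algebra_simps)
    also have "\<dots> = (1 + \<epsilon>) * (1 + \<epsilon>) - \<epsilon> * \<epsilon>" by (simp only: h1 h2)
    also have "\<dots> = 1 * (1 + 2 * \<epsilon>)" by (simp add: algebra_simps)
    finally have co2: "t0' + t0' * \<epsilon> - s0 * \<epsilon> = 1" using d by (metis mult_right_cancel)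
    note co = co1 co2
    have "s0 *\<^sub>R a' + t0' *\<^sub>R b' = (s0 + s0 * \<epsilon> - t0' * \<epsilon>) *\<^sub>R v + (t0' + t0' * \<epsilon> - s0 * \<epsilon>) *\<^sub>R w0"
      by (simp add: a'_def b'_def algebra_simps)
    hence eqw: "s0 *\<^sub>R a' + t0' *\<^sub>R b' = w0" using co by simp
    have "t0' *\<^sub>R a' + s0 *\<^sub>R b' = (t0' + t0' * \<epsilon> - s0 * \<epsilon>) *\<^sub>R v + (s0 + s0 * \<epsilon> - t0' * \<epsilon>) *\<^sub>R w0"
      by (simp add: a'_def b'_def algebra_simps)
    hence eqv: "t0' *\<^sub>R a' + s0 *\<^sub>R b' = v" using co by simp
    have Tlin: "T *v (s *\<^sub>R a' + t *\<^sub>R b') = s *\<^sub>R (T *v a') + t *\<^sub>R (T *v b')" for s t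
      by (simp add: matrix_vector_right_distrib matrix_vector_mult_scaleR)
    have seg: "proj_open_segment (T *v a') (T *v b') \<subseteq> proj_closure Om"
    proof
      fix z assume "z \<in> proj_open_segment (T *v a') (T *v b')"
      then obtain c s t where z: "z = c *\<^sub>R (s *\<^sub>R (T *v a') + t *\<^sub>R (T *v b'))" "c \<noteq> 0" "0 < s" "0 < t"
        unfolding proj_open_segment_def by blast
      have "s *\<^sub>R a' + t *\<^sub>R b' \<in> D" using z a'D b'D by (intro D_add D_scale) auto
      hence "c *\<^sub>R (s *\<^sub>R a' + t *\<^sub>R b') \<in> Om" using D_Om Om_scale z(2) by blast
      hence "T *v (c *\<^sub>R (s *\<^sub>R a' + t *\<^sub>R b')) \<in> proj_closure Om" by (rule TpO)
      thus "z \<in> proj_closure Om" using z(1) by (simp add: matrix_vector_mult_scaleR Tlin)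
    qed
    have "x0 \<in> proj_open_segment (T *v a') (T *v b')"
      using seg_mem[OF st0, of "T *v a'" "T *v b'"] Tlin[of s0 t0'] eqw Tw0 by simp
    moreover have "T *v v \<in> proj_open_segment (T *v a') (T *v b')"
      using seg_mem[OF st0(2,1), of "T *v a'" "T *v b'"] Tlin[of t0' s0] eqv by simp
    moreover have "T *v v \<in> proj_closure Om" using TpO vD D_Om by blast
    ultimately show ?thesis using seg unfolding open_face_def by blast
  qed
  have face2: "T *v v \<in> open_face Om x0" if "v \<in> Om" for v
  proof -
    have "v \<in> D \<or> - v \<in> D" using that Om_D by blast
    thus ?thesis
    proof
      assume "- v \<in> D"
      hence "T *v (- v) \<in> open_face Om x0" by (rule face1)
      hence "- (T *v (- v)) \<in> open_face Om x0" by (rule face_neg)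
      thus ?thesis by (simp add: vec.neg)
    qed (rule face1)
  qed
  have img1: "(\<lambda>v. T *v v) ` Om = open_face Om x0"
  proof
    show "(\<lambda>v. T *v v) ` Om \<subseteq> open_face Om x0" using face2 by blast
    show "open_face Om x0 \<subseteq> (\<lambda>v. T *v v) ` Om"
    proof
      fix y assume y: "y \<in> open_face Om x0"
      obtain y' c2 M where b: "y = c2 *\<^sub>R y'" "c2 \<noteq> 0" "y' \<in> closure D" "0 < M"
        "M *\<^sub>R x0 - y' \<in> closure D" "M *\<^sub>R y' - x0 \<in> closure D" using face_bound[OF x0D x0nz y] by blast
      obtain u where u: "u \<in> D" "T *v u = \<rho> *\<^sub>R y'" using core[OF b(3,4,5,6)] by blast
      have "T *v ((c2 / \<rho>) *\<^sub>R u) = y" using u(2) \<rho>pos b(1) by (simp add: matrix_vector_mult_scaleR)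
      moreover have "(c2 / \<rho>) *\<^sub>R u \<in> Om" using u(1) D_Om Om_scale b(2) \<rho>pos by simp
      ultimately show "y \<in> (\<lambda>v. T *v v) ` Om" by (metis image_eqI)
    qed
  qed
  have img2: "(\<lambda>v. T *v v) ` C = open_face Om x0 \<inter> ideal_boundary C"
  proof
    show "(\<lambda>v. T *v v) ` C \<subseteq> open_face Om x0 \<inter> ideal_boundary C"
    proof
      fix z assume "z \<in> (\<lambda>v. T *v v) ` C"
      then obtain v where v: "v \<in> C" "z = T *v v" by blast
      have vO: "v \<in> Om" using v CO by blast
      have zf: "z \<in> open_face Om x0" using face2 vO v by simp
      have znO: "z \<notin> Om" by (rule face_notOm[OF x0D x0nz x0nO zf])
      have AC: "A n *v v \<in> C" for n
        using C_scale[OF G_C[OF hG v(1)], of "1 / N n"] Npos[of n] by (simp add: Ac)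
      have "(\<lambda>n. A (r n) *v v) \<longlonglongrightarrow> T *v v" by (rule tendsto_mv[OF Tlim tendsto_const])
      hence zC: "z \<in> closure C" unfolding closure_sequential v(2)
        by (intro exI[of _ "\<lambda>n. A (r n) *v v"]) (simp add: AC)
      have znz: "z \<noteq> 0" using TnzO vO v by simp
      have "z \<notin> rel_interior C" using rel_interior_subset znO CO by blast
      hence "z \<in> ideal_boundary C" using zC znz znO CO
        unfolding ideal_boundary_def proj_boundary_def proj_closure_def proj_relint_def by blast
      thus "z \<in> open_face Om x0 \<inter> ideal_boundary C" using zf by blast
    qed
    show "open_face Om x0 \<inter> ideal_boundary C \<subseteq> (\<lambda>v. T *v v) ` C"
    proof
      fix y assume yy: "y \<in> open_face Om x0 \<inter> ideal_boundary C"
      hence y: "y \<in> open_face Om x0" and yC: "y \<in> closure C" and ynz: "y \<noteq> 0"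
        unfolding ideal_boundary_def proj_boundary_def proj_closure_def by auto
      obtain y' c2 M where b: "y = c2 *\<^sub>R y'" "c2 \<noteq> 0" "y' \<in> closure D" "0 < M"
        "M *\<^sub>R x0 - y' \<in> closure D" "M *\<^sub>R y' - x0 \<in> closure D" using face_bound[OF x0D x0nz y] by blast
      have y'eq: "y' = (1 / c2) *\<^sub>R y" using b by simp
      have "y' \<in> closure C" unfolding y'eq using clC_cone yC b(2) by simp
      moreover have "y' \<noteq> 0" using ynz b by auto
      ultimately have y'CD: "y' \<in> closure (C \<inter> D)" using clC_clCD b(3) by blast
      obtain u where u: "u \<in> D" "T *v u = \<rho> *\<^sub>R y'" "u \<in> C" using core[OF b(3,4,5,6)] y'CD by blast
      have "T *v ((c2 / \<rho>) *\<^sub>R u) = y" using u(2) \<rho>pos b(1) by (simp add: matrix_vector_mult_scaleR)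
      moreover have "(c2 / \<rho>) *\<^sub>R u \<in> C" using u(3) C_scale b(2) \<rho>pos by simp
      ultimately show "y \<in> (\<lambda>v. T *v v) ` C" by (metis image_eqI)
    qed
  qed
  show ?thesis using TG Tnz TnzO img1 img2 by blast
qed

end

theorem mainTheorem7:
  fixes \<Omega> C :: "(real^'n) set" and G :: "(real^'n^'n) set" and x :: "real^'n"
  assumes "properly_convex_domain \<Omega>"
    and "C \<noteq> {}" and "C \<subseteq> \<Omega>" and "closedin (top_of_set \<Omega>) C" and "proj_convex C"
    and "in_stab G \<Omega> C"
    and "cocompact G C"
    and "x \<in> ideal_boundary C"
  shows "\<exists>T \<in> closure G. T \<noteq> 0 \<and>
           (\<forall>v\<in>\<Omega>. T *v v \<noteq> 0) \<and>
           (\<lambda>v. T *v v) ` \<Omega> = open_face \<Omega> x \<and>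
           (\<lambda>v. T *v v) ` C = open_face \<Omega> x \<inter> ideal_boundary C"
proof -
  obtain f where f: "proj_set \<Omega>" "open \<Omega>" "linear f" "\<forall>v\<in>\<Omega>. f v \<noteq> 0"
      "bounded (chart f ` \<Omega>)" "convex (chart f ` \<Omega>)"
    using assms(1) unfolding properly_convex_domain_def in_chart_def by blast
  obtain f' where f': "proj_set C" "linear f'" "\<forall>v\<in>C. f' v \<noteq> 0" "convex (chart f' ` C)"
    using assms(5) unfolding proj_convex_def in_chart_def by blast
  have One: "\<Omega> \<noteq> {}" using assms(2,3) by blast
  have pc: "pcdC \<Omega> f C f'"
    unfolding pcdC_def pcd_def pcdC_axioms_def using f f' One assms(3,4) by blast
  interpret P: pcdC \<Omega> f C f' by (rule pc)
  have xC: "x \<in> closure C" and xnz: "x \<noteq> 0" and xnC: "x \<notin> C"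
    using assms(8) unfolding ideal_boundary_def proj_boundary_def proj_closure_def by auto
  have "x \<in> closure \<Omega>" using xC closure_mono[OF assms(3)] by blast
  hence "x \<in> closure P.D \<or> - x \<in> closure P.D" by (rule P.clOm_cases)
  then obtain x0 where x0: "x0 \<in> closure P.D" "x0 = x \<or> x0 = - x" by blast
  have x0C: "x0 \<in> closure C" using x0(2) xC P.clC_cone[OF xC, of "-1"] by auto
  have x0nz: "x0 \<noteq> 0" using x0(2) xnz by auto
  have x0nC: "x0 \<notin> C" using x0(2) xnC P.C_scale[of "- x" "-1"] by auto
  obtain c where c: "c \<in> C" using assms(2) by blast
  hence "c \<in> P.D \<or> - c \<in> P.D" using assms(3) P.Om_D by blast
  then obtain p where p: "p \<in> C" "p \<in> P.D" using c P.C_scale[of c "-1"] by auto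
  have G1: "pgl_subgroup G" and G2: "\<forall>g\<in>G. (\<lambda>v. g *v v) ` \<Omega> = \<Omega> \<and> (\<lambda>v. g *v v) ` C = C"
    using assms(6) unfolding in_stab_def by auto
  obtain K where K: "compact K" "K \<subseteq> C" "C = {g *v k | g k. g \<in> G \<and> k \<in> K}"
    using assms(7) unfolding cocompact_def by blast
  interpret M: mainloc \<Omega> f C f' G K x0 p
    unfolding mainloc_def mainloc_axioms_def using pc G1 G2 K x0(1) x0C x0nz x0nC p by blast
  have "open_face \<Omega> x0 = open_face \<Omega> x" using x0(2) P.face_negx by auto
  thus ?thesis using M.main_result by simp
qed

end
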